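(* Let $X=\{x_j:j\in J\}\subset\mathbb{R}^2$ be finite with $n=|J|$ and quadratic min-power centre $s^*$. There exist multipliers $\lambda_j\geq0$, $j\in J$, at most $3$ of which are nonzero, such that $s^*=\sum_{j\in J}\lambda_jM_j$, $\sum_{j\in J}\lambda_j=1$, and $\lambda_j\big(\|s^*-x_j\|-\max_{i\in J}\|s^*-x_i\|\big)=0$ for all $j\in J$.
   Context: $s^*$ is the unique minimiser of $P(s)=\sum_{i\in J}\|s-x_i\|^2+\max_{i\in J}\|s-x_i\|^2$; $M_j=\frac{1}{n+1}\big(x_j+\sum_{i\in J}x_i\big)$. *)

theory Defs
  imports "HOL-Analysis.Analysis"
begin

definition qmp_P :: "'a set \<Rightarrow> ('a \<Rightarrow> real^2) \<Rightarrow> real^2 \<Rightarrow> real" where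
  "qmp_P J x s = (\<Sum>i\<in>J. (norm (s - x i))\<^sup>2) + Max ((\<lambda>i. (norm (s - x i))\<^sup>2) ` J)"

definition qmp_M :: "'a set \<Rightarrow> ('a \<Rightarrow> real^2) \<Rightarrow> 'a \<Rightarrow> real^2" where
  "qmp_M J x j = (1 / (real (card J) + 1)) *\<^sub>R (x j + (\<Sum>i\<in>J. x i))"

end

theory Submission
  imports Defs
begin

lemma norm_add_scale_sq:
  fixes w a :: "'b::real_inner"
  shows "(norm (w + t *\<^sub>R a))\<^sup>2 = (norm w)\<^sup>2 + 2 * t * (a \<bullet> w) + t\<^sup>2 * (norm a)\<^sup>2"
proof -
  have "(norm (w + t *\<^sub>R a))\<^sup>2 = (w + t *\<^sub>R a) \<bullet> (w + t *\<^sub>R a)" by (simp add: power2_norm_eq_inner)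
  also have "\<dots> = w \<bullet> w + 2 * t * (a \<bullet> w) + t\<^sup>2 * (a \<bullet> a)"
    by (simp add: inner_add_left inner_add_right inner_commute algebra_simps power2_eq_square)
  finally show ?thesis by (simp add: power2_norm_eq_inner)
qed

lemma quad_eventually_neg:
  fixes c0 c1 c2 :: real
  assumes "c0 < 0 \<or> (c0 = 0 \<and> c1 < 0)"
  shows "\<forall>\<^sub>F t in at_right 0. c0 + t * c1 + t\<^sup>2 * c2 < 0"
  using assms
proof
  assume h: "c0 < 0"
  have "((\<lambda>t. c0 + t * c1 + t\<^sup>2 * c2) \<longlongrightarrow> c0 + 0 * c1 + 0\<^sup>2 * c2) (at_right 0)"
    by (intro tendsto_intros)
  then have "((\<lambda>t::real. c0 + t * c1 + t\<^sup>2 * c2) \<longlongrightarrow> c0) (at_right 0)" by simp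
  from order_tendstoD(2)[OF this h] show ?thesis .
next
  assume h: "c0 = 0 \<and> c1 < 0"
  have "((\<lambda>t. c1 + t * c2) \<longlongrightarrow> c1 + 0 * c2) (at_right 0)"
    by (intro tendsto_intros)
  then have "((\<lambda>t::real. c1 + t * c2) \<longlongrightarrow> c1) (at_right 0)" by simp
  from order_tendstoD(2)[OF this] h have ev: "\<forall>\<^sub>F t in at_right 0. c1 + t * c2 < 0" by simp
  show ?thesis
    using ev eventually_at_right_less[of "0::real"]
  proof eventually_elim
    case (elim t)
    then have "t * (c1 + t * c2) < 0" by (simp add: mult_pos_neg)
    then show ?case using h by (simp add: algebra_simps power2_eq_square)
  qed
qed

theorem lemma5:
  fixes J :: "'a set" and x :: "'a \<Rightarrow> real^2" and s :: "real^2"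
  assumes "finite J" and "J \<noteq> {}"
    and "\<forall>t. qmp_P J x s \<le> qmp_P J x t"
    and "\<forall>t. (\<forall>u. qmp_P J x t \<le> qmp_P J x u) \<longrightarrow> t = s"
  shows "\<exists>lam :: 'a \<Rightarrow> real.
           (\<forall>j\<in>J. lam j \<ge> 0)
         \<and> card {j\<in>J. lam j \<noteq> 0} \<le> 3
         \<and> s = (\<Sum>j\<in>J. lam j *\<^sub>R qmp_M J x j)
         \<and> (\<Sum>j\<in>J. lam j) = 1
         \<and> (\<forall>j\<in>J. lam j * (norm (s - x j) - Max ((\<lambda>i. norm (s - x i)) ` J)) = 0)"
proof -
  note fin = assms(1) and ne = assms(2) and minP = assms(3)
  define R where "R = Max ((\<lambda>i. norm (s - x i)) ` J)"
  define A where "A = {j\<in>J. norm (s - x j) = R}"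
  define m where "m = real (card J) + 1"
  define M where "M = qmp_M J x"
  have mpos: "m > 0" unfolding m_def by simp
  have Rge: "\<forall>i\<in>J. norm (s - x i) \<le> R" unfolding R_def using fin by simp
  have "R \<in> (\<lambda>i. norm (s - x i)) ` J" unfolding R_def using fin ne by (intro Max_in) auto
  then obtain j0 where j0: "j0 \<in> J" "norm (s - x j0) = R" by auto
  then have Ane: "A \<noteq> {}" unfolding A_def by auto
  have finA: "finite A" unfolding A_def using fin by simp
  have AJ: "A \<subseteq> J" unfolding A_def by auto
  have MaxSq: "Max ((\<lambda>i. (norm (s - x i))\<^sup>2) ` J) = R\<^sup>2"
  proof (rule Max_eqI)
    show "finite ((\<lambda>i. (norm (s - x i))\<^sup>2) ` J)" using fin by simp
    show "R\<^sup>2 \<in> (\<lambda>i. (norm (s - x i))\<^sup>2) ` J" using j0 by force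
    fix y assume "y \<in> (\<lambda>i. (norm (s - x i))\<^sup>2) ` J"
    then obtain i where "i \<in> J" "y = (norm (s - x i))\<^sup>2" by auto
    then show "y \<le> R\<^sup>2" using Rge by (simp add: power_mono)
  qed
  have Ps: "qmp_P J x s = (\<Sum>i\<in>J. (norm (s - x i))\<^sup>2) + R\<^sup>2"
    unfolding qmp_P_def MaxSq ..
  have Mj: "x j + (\<Sum>i\<in>J. x i) = m *\<^sub>R M j" for j
    unfolding M_def qmp_M_def m_def using mpos[unfolded m_def] by simp
  have hull: "s \<in> convex hull (M ` A)"
  proof (rule ccontr)
    assume ns: "s \<notin> convex hull (M ` A)"
    have "convex (convex hull (M ` A))" by simp
    moreover have "closed (convex hull (M ` A))"
      using finA by (intro compact_imp_closed compact_convex_hull finite_imp_compact) simp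
    ultimately obtain a b where ab: "a \<bullet> s < b" "\<forall>y\<in>convex hull (M ` A). b < a \<bullet> y"
      using separating_hyperplane_closed_point[OF _ _ ns] by blast
    have aM: "a \<bullet> s < a \<bullet> M j" if "j \<in> A" for j
      using ab that hull_inc[of "M j" "M ` A" convex] by force
    define c1 where "c1 j = 2 * (\<Sum>i\<in>J. a \<bullet> (s - x i)) + 2 * (a \<bullet> (s - x j))" for j
    define c2 where "c2 = m * (norm a)\<^sup>2"
    have expand: "(\<Sum>i\<in>J. (norm (s + t *\<^sub>R a - x i))\<^sup>2) + (norm (s + t *\<^sub>R a - x j))\<^sup>2 - qmp_P J x s
        = ((norm (s - x j))\<^sup>2 - R\<^sup>2) + t * c1 j + t\<^sup>2 * c2" for t j
    proof -
      have e: "s + t *\<^sub>R a - x i = (s - x i) + t *\<^sub>R a" for i by (simp add: algebra_simps)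
      have "(\<Sum>i\<in>J. (norm (s + t *\<^sub>R a - x i))\<^sup>2)
          = (\<Sum>i\<in>J. (norm (s - x i))\<^sup>2 + 2 * t * (a \<bullet> (s - x i)) + t\<^sup>2 * (norm a)\<^sup>2)"
        unfolding e norm_add_scale_sq ..
      also have "\<dots> = (\<Sum>i\<in>J. (norm (s - x i))\<^sup>2) + 2 * t * (\<Sum>i\<in>J. a \<bullet> (s - x i))
           + real (card J) * (t\<^sup>2 * (norm a)\<^sup>2)"
        by (simp only: sum.distrib sum_distrib_left[symmetric] sum_constant) (simp add: algebra_simps)
      finally have h: "(\<Sum>i\<in>J. (norm (s + t *\<^sub>R a - x i))\<^sup>2) = \<dots>" .
      have h2: "(norm (s + t *\<^sub>R a - x j))\<^sup>2 = (norm (s - x j))\<^sup>2 + 2 * t * (a \<bullet> (s - x j)) + t\<^sup>2 * (norm a)\<^sup>2"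
        unfolding e norm_add_scale_sq ..
      show ?thesis
        unfolding h h2 Ps c1_def c2_def m_def
        by (simp add: algebra_simps)
    qed
    have ev: "\<forall>j\<in>J. \<forall>\<^sub>F t in at_right 0.
        (\<Sum>i\<in>J. (norm (s + t *\<^sub>R a - x i))\<^sup>2) + (norm (s + t *\<^sub>R a - x j))\<^sup>2 < qmp_P J x s"
    proof
      fix j assume jJ: "j \<in> J"
      have "(norm (s - x j))\<^sup>2 - R\<^sup>2 < 0 \<or> ((norm (s - x j))\<^sup>2 - R\<^sup>2 = 0 \<and> c1 j < 0)"
      proof (cases "j \<in> A")
        case True
        then have nj: "norm (s - x j) = R" unfolding A_def by simp
        have "(\<Sum>i\<in>J. a \<bullet> (s - x i)) + a \<bullet> (s - x j) = a \<bullet> ((\<Sum>i\<in>J. (s - x i)) + (s - x j))"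
          by (simp add: inner_sum_right inner_add_right)
        also have "(\<Sum>i\<in>J. (s - x i)) + (s - x j) = m *\<^sub>R s - (x j + (\<Sum>i\<in>J. x i))"
          by (simp add: sum_subtractf m_def algebra_simps scaleR_add_left sum_constant_scaleR del: sum_constant)
        also have "\<dots> = m *\<^sub>R (s - M j)" unfolding Mj by (simp add: algebra_simps)
        finally have "c1 j = 2 * m * (a \<bullet> s - a \<bullet> M j)"
          unfolding c1_def by (simp add: inner_diff_right algebra_simps)
        moreover have "a \<bullet> s - a \<bullet> M j < 0" using aM[OF True] by simp
        ultimately have "c1 j < 0" using mpos by (simp add: mult_pos_neg)
        then show ?thesis using nj by simp
      next
        case False
        then have "norm (s - x j) < R" using Rge jJ unfolding A_def by force
        then have "(norm (s - x j))\<^sup>2 < R\<^sup>2" by (simp add: power_strict_mono)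
        then show ?thesis by simp
      qed
      from quad_eventually_neg[OF this, of c2]
      show "\<forall>\<^sub>F t in at_right 0.
        (\<Sum>i\<in>J. (norm (s + t *\<^sub>R a - x i))\<^sup>2) + (norm (s + t *\<^sub>R a - x j))\<^sup>2 < qmp_P J x s"
      proof eventually_elim
        case (elim t)
        then show ?case using expand[of t j] by linarith
      qed
    qed
    have "\<forall>\<^sub>F t in at_right (0::real). \<forall>j\<in>J.
        (\<Sum>i\<in>J. (norm (s + t *\<^sub>R a - x i))\<^sup>2) + (norm (s + t *\<^sub>R a - x j))\<^sup>2 < qmp_P J x s"
      using eventually_ball_finite[OF fin ev] .
    then obtain t where t: "\<forall>j\<in>J.
        (\<Sum>i\<in>J. (norm (s + t *\<^sub>R a - x i))\<^sup>2) + (norm (s + t *\<^sub>R a - x j))\<^sup>2 < qmp_P J x s"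
      using eventually_happens trivial_limit_at_right_real by blast
    have "Max ((\<lambda>i. (norm (s + t *\<^sub>R a - x i))\<^sup>2) ` J) \<in> (\<lambda>i. (norm (s + t *\<^sub>R a - x i))\<^sup>2) ` J"
      using fin ne by (intro Max_in) auto
    then obtain j where jJ: "j \<in> J" and
      jmax: "Max ((\<lambda>i. (norm (s + t *\<^sub>R a - x i))\<^sup>2) ` J) = (norm (s + t *\<^sub>R a - x j))\<^sup>2" by auto
    have "qmp_P J x (s + t *\<^sub>R a) < qmp_P J x s"
      unfolding qmp_P_def[of J x "s + t *\<^sub>R a"] jmax using t jJ by blast
    then show False using minP by (meson not_less)
  qed
  have "s \<in> {y. \<exists>S. finite S \<and> S \<subseteq> M ` A \<and> card S \<le> DIM(real^2) + 1 \<and> y \<in> convex hull S}"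
    using hull caratheodory by blast
  then obtain S where S: "finite S" "S \<subseteq> M ` A" "card S \<le> 3" "s \<in> convex hull S" by auto
  obtain u where u: "\<forall>p\<in>S. 0 \<le> u p" "sum u S = 1" "(\<Sum>p\<in>S. u p *\<^sub>R p) = s"
    using S(4) convex_hull_finite[OF S(1)] by auto
  define g where "g p = (SOME j. j \<in> A \<and> M j = p)" for p
  have g: "g p \<in> A \<and> M (g p) = p" if "p \<in> S" for p
  proof -
    have "\<exists>j. j \<in> A \<and> M j = p" using S(2) that by auto
    then show ?thesis unfolding g_def by (rule someI_ex)
  qed
  have inj: "inj_on g S" by (metis g inj_onI)
  have gSJ: "g ` S \<subseteq> J" using g AJ by blast
  define lam where "lam j = (if j \<in> g ` S then u (M j) else 0)" for j
  have lamg: "lam (g p) = u p" if "p \<in> S" for p using g[OF that] that unfolding lam_def by auto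
  show ?thesis
  proof (intro exI[of _ lam] conjI ballI)
    fix j assume "j \<in> J"
    show "lam j \<ge> 0"
    proof (cases "j \<in> g ` S")
      case True then obtain p where "p \<in> S" "j = g p" by auto
      then show ?thesis using lamg u(1) by simp
    qed (simp add: lam_def)
    show "lam j * (norm (s - x j) - Max ((\<lambda>i. norm (s - x i)) ` J)) = 0"
    proof (cases "j \<in> g ` S")
      case True then obtain p where "p \<in> S" "j = g p" by auto
      then have "j \<in> A" using g by auto
      then show ?thesis unfolding A_def R_def by simp
    qed (simp add: lam_def)
  next
    have "{j\<in>J. lam j \<noteq> 0} \<subseteq> g ` S" unfolding lam_def by auto
    then have "card {j\<in>J. lam j \<noteq> 0} \<le> card (g ` S)" using S(1) by (intro card_mono) auto
    also have "\<dots> \<le> card S" using card_image_le S(1) by blast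
    finally show "card {j\<in>J. lam j \<noteq> 0} \<le> 3" using S(3) by simp
  next
    have "(\<Sum>j\<in>J. lam j *\<^sub>R qmp_M J x j) = (\<Sum>j\<in>g ` S. lam j *\<^sub>R M j)"
      unfolding M_def using fin gSJ by (intro sum.mono_neutral_right) (auto simp: lam_def)
    also have "\<dots> = (\<Sum>p\<in>S. lam (g p) *\<^sub>R M (g p))" using sum.reindex[OF inj] by simp
    also have "\<dots> = (\<Sum>p\<in>S. u p *\<^sub>R p)" using g lamg by (intro sum.cong) auto
    finally show "s = (\<Sum>j\<in>J. lam j *\<^sub>R qmp_M J x j)" using u(3) by simp
  next
    have "(\<Sum>j\<in>J. lam j) = (\<Sum>j\<in>g ` S. lam j)"
      using fin gSJ by (intro sum.mono_neutral_right) (auto simp: lam_def)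
    also have "\<dots> = (\<Sum>p\<in>S. lam (g p))" using sum.reindex[OF inj] by simp
    also have "\<dots> = (\<Sum>p\<in>S. u p)" using lamg by (intro sum.cong) auto
    finally show "(\<Sum>j\<in>J. lam j) = 1" using u(2) by simp
  qed
qed

end
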